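(* Let $\mathcal V=\{1,\dots,V\}$ be a vocabulary, $L\ge 1$, and let $P$ be a probability distribution on $\mathcal V^L$. Let $Q_\theta$ be an autoregressive model on $\mathcal V^L$ given by a logit map $F_\theta$, i.e. $Q_\theta(x_l\mid \mathbf x_{<l})=\mathrm{softmax}(F_\theta(\mathbf x_{<l}))_{x_l}$, and for a temperature $t>0$ let $Q^t_\theta(\mathbf x)=\prod_{l=1}^L \mathrm{softmax}(F_\theta(\mathbf x_{<l})/t)_{x_l}$. Let $$Z=\max_{\mathbf x\in\mathcal V^L}\ \max_{l\in\{1,\dots,L\}}\ \max_{i,j\in\mathcal V}\big(F_\theta(\mathbf x_{<l})_i-F_\theta(\mathbf x_{<l})_j\big).$$ Then for every temperature $t>0$ and every $\lambda\in(0,\infty)$, $$\alpha_\lambda(P\Vert Q^t_\theta)\le \frac{|\mathrm{Supp}(P)|}{V^L}e^{ZL/t}\quad\text{and}\quad \beta_\lambda(P\Vert Q^t_\theta)\le \frac1\lambda\,\frac{|\mathrm{Supp}(P)|}{V^L}e^{ZL/t}.$$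
   Context: For distributions $P,Q$ on a finite set $\mathcal X$ and $\lambda\in(0,\infty)$, the PR-curve quantities are $\alpha_\lambda(P\Vert Q)=\sum_{\mathbf x\in\mathcal X}\min(\lambda P(\mathbf x),Q(\mathbf x))$ (Precision at trade-off $\lambda$) and $\beta_\lambda(P\Vert Q)=\sum_{\mathbf x\in\mathcal X}\min(P(\mathbf x),Q(\mathbf x)/\lambda)$ (Recall at trade-off $\lambda$). $\mathrm{Supp}(P)$ is the set of sequences with positive $P$-probability, $\mathbf x_{<l}=(x_1,\dots,x_{l-1})$ (empty for $l=1$), and $F_\theta(\mathbf x_{<l})\in\mathbb R^V$ is the logit vector with entries $F_\theta(\mathbf x_{<l})_i$. *)

theory Defs
  imports Complex_Main
begin

definition seqs :: "nat \<Rightarrow> nat \<Rightarrow> nat list set" where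
  "seqs V L = {xs. length xs = L \<and> set xs \<subseteq> {1..V}}"

definition softmax :: "nat \<Rightarrow> (nat \<Rightarrow> real) \<Rightarrow> nat \<Rightarrow> real" where
  "softmax V f i = exp (f i) / (\<Sum>j\<in>{1..V}. exp (f j))"

text \<open>Temperature-scaled autoregressive model: prefix x_{<l} = take (l-1) xs,
  token x_l = xs ! (l-1).\<close>
definition Qtemp :: "nat \<Rightarrow> nat \<Rightarrow> (nat list \<Rightarrow> nat \<Rightarrow> real) \<Rightarrow> real \<Rightarrow> nat list \<Rightarrow> real" where
  "Qtemp V L F t xs = (\<Prod>l\<in>{1..L}. softmax V (\<lambda>i. F (take (l - 1) xs) i / t) (xs ! (l - 1)))"

definition PR_alpha :: "'a set \<Rightarrow> real \<Rightarrow> ('a \<Rightarrow> real) \<Rightarrow> ('a \<Rightarrow> real) \<Rightarrow> real" where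
  "PR_alpha X lam P Q = (\<Sum>x\<in>X. min (lam * P x) (Q x))"

definition PR_beta :: "'a set \<Rightarrow> real \<Rightarrow> ('a \<Rightarrow> real) \<Rightarrow> ('a \<Rightarrow> real) \<Rightarrow> real" where
  "PR_beta X lam P Q = (\<Sum>x\<in>X. min (P x) (Q x / lam))"

definition Supp :: "'a set \<Rightarrow> ('a \<Rightarrow> real) \<Rightarrow> 'a set" where
  "Supp X P = {x\<in>X. P x > 0}"

definition logit_gap :: "nat \<Rightarrow> nat \<Rightarrow> (nat list \<Rightarrow> nat \<Rightarrow> real) \<Rightarrow> real" where
  "logit_gap V L F = Max {F (take (l - 1) xs) i - F (take (l - 1) xs) j | xs l i j.
      xs \<in> seqs V L \<and> l \<in> {1..L} \<and> i \<in> {1..V} \<and> j \<in> {1..V}}"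

end

theory Submission
  imports Defs
begin

lemma fin_seqs: "finite (seqs V L)"
proof -
  have "seqs V L = {xs. set xs \<subseteq> {1..V} \<and> length xs = L}" unfolding seqs_def by auto
  then show ?thesis using finite_lists_length_eq[of "{1..V}" L] by simp
qed

lemma gap_le:
  assumes "xs \<in> seqs V L" "l \<in> {1..L}" "i \<in> {1..V}" "j \<in> {1..V}"
  shows "F (take (l - 1) xs) i - F (take (l - 1) xs) j \<le> logit_gap V L F"
proof -
  let ?S = "{F (take (l - 1) xs) i - F (take (l - 1) xs) j | xs l i j.
      xs \<in> seqs V L \<and> l \<in> {1..L} \<and> i \<in> {1..V} \<and> j \<in> {1..V}}"
  have "?S \<subseteq> (\<lambda>(xs,l,i,j). F (take (l - 1) xs) i - F (take (l - 1) xs) j) ` (seqs V L \<times> {1..L} \<times> {1..V} \<times> {1..V})"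
    by (auto simp: image_iff) fastforce
  then have "finite ?S" by (rule finite_subset) (simp add: fin_seqs)
  moreover have "F (take (l - 1) xs) i - F (take (l - 1) xs) j \<in> ?S" using assms by blast
  ultimately show ?thesis unfolding logit_gap_def by (rule Max_ge)
qed

lemma soft_bound:
  assumes "V \<ge> 1" "i \<in> {1..V}" "\<forall>j\<in>{1..V}. f i - f j \<le> Z" "t > 0"
  shows "softmax V (\<lambda>k. f k / t) i \<le> exp (Z / t) / real V"
proof -
  have "\<forall>j\<in>{1..V}. exp ((f i - Z) / t) \<le> exp (f j / t)"
  proof
    fix j assume "j \<in> {1..V}"
    then have "f i - f j \<le> Z" using assms(3) by blast
    then have "f i - Z \<le> f j" by linarith
    then have "(f i - Z) / t \<le> f j / t" using assms(4) by (simp add: divide_right_mono)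
    then show "exp ((f i - Z) / t) \<le> exp (f j / t)" by simp
  qed
  then have "(\<Sum>j\<in>{1..V}. exp ((f i - Z) / t)) \<le> (\<Sum>j\<in>{1..V}. exp (f j / t))"
    by (intro sum_mono) auto
  then have S: "real V * exp ((f i - Z) / t) \<le> (\<Sum>j\<in>{1..V}. exp (f j / t))" by simp
  have pos: "0 < real V * exp ((f i - Z) / t)" using assms(1) by simp
  have "softmax V (\<lambda>k. f k / t) i = exp (f i / t) / (\<Sum>j\<in>{1..V}. exp (f j / t))"
    unfolding softmax_def by simp
  also have "\<dots> \<le> exp (f i / t) / (real V * exp ((f i - Z) / t))"
    using S pos by (intro divide_left_mono) auto
  also have "\<dots> = exp (Z / t) / real V"
  proof -
    have "exp (f i / t) = exp ((f i - Z) / t) * exp (Z / t)"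
      by (simp add: exp_add[symmetric] diff_divide_distrib)
    then show ?thesis using assms(1) by simp
  qed
  finally show ?thesis .
qed

lemma soft_nonneg: "0 \<le> softmax V f i"
  unfolding softmax_def by (simp add: sum_nonneg)

lemma Q_bound:
  assumes "V \<ge> 1" "xs \<in> seqs V L" "t > 0"
  shows "0 \<le> Qtemp V L F t xs \<and> Qtemp V L F t xs \<le> exp (logit_gap V L F * real L / t) / real V ^ L"
proof -
  have len: "length xs = L" and st: "set xs \<subseteq> {1..V}" using assms(2) unfolding seqs_def by auto
  have each: "softmax V (\<lambda>i. F (take (l - 1) xs) i / t) (xs ! (l - 1)) \<le> exp (logit_gap V L F / t) / real V"
    if l: "l \<in> {1..L}" for l
  proof -
    have "xs ! (l - 1) \<in> set xs" using l len by auto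
    then have xi: "xs ! (l - 1) \<in> {1..V}" using st by auto
    show ?thesis
      by (rule soft_bound[OF assms(1) xi _ assms(3)]) (use gap_le[OF assms(2) l xi] in auto)
  qed
  have "Qtemp V L F t xs \<le> (\<Prod>l\<in>{1..L}. exp (logit_gap V L F / t) / real V)"
    unfolding Qtemp_def by (intro prod_mono) (use soft_nonneg each in blast)
  also have "\<dots> = (exp (logit_gap V L F / t) / real V) ^ L" by simp
  also have "\<dots> = exp (logit_gap V L F * real L / t) / real V ^ L"
    by (simp add: power_divide exp_of_nat_mult[symmetric] mult.commute)
  finally show ?thesis unfolding Qtemp_def by (auto simp: soft_nonneg prod_nonneg)
qed

theorem theorem4p2:
  fixes V L :: nat and P :: "nat list \<Rightarrow> real" and F :: "nat list \<Rightarrow> nat \<Rightarrow> real"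
    and t lam :: real
  assumes "L \<ge> 1"
    and "\<forall>x\<in>seqs V L. P x \<ge> 0"
    and "(\<Sum>x\<in>seqs V L. P x) = 1"
    and "t > 0" and "lam > 0"
  shows "PR_alpha (seqs V L) lam P (Qtemp V L F t)
           \<le> real (card (Supp (seqs V L) P)) / real V ^ L * exp (logit_gap V L F * real L / t)
       \<and> PR_beta (seqs V L) lam P (Qtemp V L F t)
           \<le> (1 / lam) * (real (card (Supp (seqs V L) P)) / real V ^ L) * exp (logit_gap V L F * real L / t)"
proof -
  let ?X = "seqs V L"
  let ?Q = "Qtemp V L F t"
  let ?B = "exp (logit_gap V L F * real L / t) / real V ^ L"
  let ?S = "Supp ?X P"
  have V1: "V \<ge> 1"
  proof (rule ccontr)
    assume "\<not> V \<ge> 1"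
    then have "V = 0" by simp
    then have "?X = {}" using assms(1) unfolding seqs_def by auto
    then show False using assms(3) by simp
  qed
  have QB: "\<And>x. x \<in> ?X \<Longrightarrow> 0 \<le> ?Q x \<and> ?Q x \<le> ?B" using Q_bound[OF V1 _ assms(4)] by blast
  have fin: "finite ?X" by (rule fin_seqs)
  have SX: "?S \<subseteq> ?X" unfolding Supp_def by auto
  have outside: "\<And>x. x \<in> ?X - ?S \<Longrightarrow> P x = 0" using assms(2) unfolding Supp_def by force
  have a: "PR_alpha ?X lam P ?Q \<le> real (card ?S) * ?B"
  proof -
    have "PR_alpha ?X lam P ?Q = (\<Sum>x\<in>?S. min (lam * P x) (?Q x)) + (\<Sum>x\<in>?X - ?S. min (lam * P x) (?Q x))"
      unfolding PR_alpha_def using sum.subset_diff[OF SX fin] by (simp add: add.commute)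
    also have "(\<Sum>x\<in>?X - ?S. min (lam * P x) (?Q x)) = 0"
      by (rule sum.neutral) (use outside QB in auto)
    also have "(\<Sum>x\<in>?S. min (lam * P x) (?Q x)) \<le> (\<Sum>x\<in>?S. ?B)"
      by (rule sum_mono) (use QB SX in force)
    finally show ?thesis by simp
  qed
  have b: "PR_beta ?X lam P ?Q \<le> real (card ?S) * (?B / lam)"
  proof -
    have "PR_beta ?X lam P ?Q = (\<Sum>x\<in>?S. min (P x) (?Q x / lam)) + (\<Sum>x\<in>?X - ?S. min (P x) (?Q x / lam))"
      unfolding PR_beta_def using sum.subset_diff[OF SX fin] by (simp add: add.commute)
    also have "(\<Sum>x\<in>?X - ?S. min (P x) (?Q x / lam)) = 0"
      by (rule sum.neutral) (use outside QB assms(5) in auto)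
    also have "(\<Sum>x\<in>?S. min (P x) (?Q x / lam)) \<le> (\<Sum>x\<in>?S. ?B / lam)"
    proof (rule sum_mono)
      fix x assume "x \<in> ?S"
      then have "?Q x \<le> ?B" using QB SX by blast
      then have "?Q x / lam \<le> ?B / lam" by (rule divide_right_mono) (use assms(5) in auto)
      then show "min (P x) (?Q x / lam) \<le> ?B / lam" by simp
    qed
    finally show ?thesis by simp
  qed
  show ?thesis using a b by (simp add: field_simps)
qed

end
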